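(* Let $n,s,r$ be positive integers, let $\mathbf{W}_{\mathbf{x}}\in\mathbb{R}^{n\times n}$ and $\mathbf{W}_{\boldsymbol{\xi}}\in\mathbb{R}^{s\times s}$ be diagonal matrices with positive diagonal entries, and let $t\mapsto \bm{T}(t)\in\mathbb{R}^{n\times s}$ be a given differentiable matrix-valued function of time with derivative $\dot{\bm{T}}$. For matrices $\bm{U}\in\mathbb{R}^{n\times r}$, $\bm{Y}\in\mathbb{R}^{s\times r}$ and a skew-symmetric matrix function $\boldsymbol{\phi}(t)\in\mathbb{R}^{r\times r}$, consider the evolution equations $$\dot{\bm{U}} = \left(\bm{I}-\bm{U}\bm{U}^T\mathbf{W}_{\mathbf{x}}\right)\dot{\bm{T}}\,\mathbf{W}_{\boldsymbol{\xi}}\,\bm{Y}\,\bm{C}^{-1} + \bm{U}\boldsymbol{\phi},\qquad \dot{\bm{Y}} = \dot{\bm{T}}^T\mathbf{W}_{\mathbf{x}}\bm{U} + \bm{Y}\boldsymbol{\phi},$$ where $\bm{C}=\bm{Y}^T\mathbf{W}_{\boldsymbol{\xi}}\bm{Y}\in\mathbb{R}^{r\times r}$ is assumed invertible. Suppose $\{\bm{Y},\bm{U}\}$ satisfies these equations with a skew-symmetric choice $\boldsymbol{\phi}(t)$ and $\{\widetilde{\bm{Y}},\widetilde{\bm{U}}\}$ satisfies them (with $\widetilde{\bm{C}}=\widetilde{\bm{Y}}^T\mathbf{W}_{\boldsymbol{\xi}}\widetilde{\bm{Y}}$ in place of $\bm{C}$) with a skew-symmetric choice $\widetilde{\boldsymbol{\phi}}(t)$.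 Assume the two reductions are initially equivalent, i.e. $\bm{U}(0)=\widetilde{\bm{U}}(0)\bm{R}_0$ and $\bm{Y}(0)=\widetilde{\bm{Y}}(0)\bm{R}_0$ for some orthogonal matrix $\bm{R}_0\in\mathbb{R}^{r\times r}$ ($\bm{R}_0^T\bm{R}_0=\bm{I}$). Then for $t>0$ the two reductions are equivalent, i.e. $\bm{U}(t)=\widetilde{\bm{U}}(t)\bm{R}(t)$ and $\bm{Y}(t)=\widetilde{\bm{Y}}(t)\bm{R}(t)$ with an orthogonal matrix $\bm{R}(t)\in\mathbb{R}^{r\times r}$ governed by the matrix differential equation $\dot{\bm{R}}=\bm{R}\boldsymbol{\phi}-\widetilde{\boldsymbol{\phi}}\bm{R}$, $\bm{R}(0)=\bm{R}_0$.
   Context: The columns of $\bm{T}(t)$ are (mean-subtracted) observations of a stochastic system at time $t$; $\mathbf{W}_{\mathbf{x}}=\mathrm{diag}(\mathbf{w}_{\mathbf{x}})$ are state-space weights and $\mathbf{W}_{\boldsymbol{\xi}}=\mathrm{diag}(\mathbf{w}_{\boldsymbol{\xi}})$ are sample weights. The columns of $\bm{U}$ (the dynamic basis) are orthonormal with respect to the weighted inner product $\langle \bm{u}_i,\bm{u}_j\rangle=\bm{u}_i^T\mathbf{W}_{\mathbf{x}}\bm{u}_j$, i.e. $\bm{U}^T\mathbf{W}_{\mathbf{x}}\bm{U}=\bm{I}$, and $\boldsymbol{\phi}_{ij}=\langle\bm{u}_i,\dot{\bm{u}}_j\rangle$ is skew-symmetric. Two reductions $\{\bm{Y},\bm{U}\}$,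 $\{\widetilde{\bm{Y}},\widetilde{\bm{U}}\}$ with $\bm{U},\widetilde{\bm{U}}\in\mathbb{R}^{n\times r}$, $\bm{Y},\widetilde{\bm{Y}}\in\mathbb{R}^{s\times r}$ are called equivalent if there is an orthogonal $\bm{R}\in\mathbb{R}^{r\times r}$ with $\bm{U}=\widetilde{\bm{U}}\bm{R}$ and $\bm{Y}=\widetilde{\bm{Y}}\bm{R}$. *)

theory Defs
  imports "HOL-Analysis.Analysis"
begin

definition diag_mat :: "real ^ 'n \<Rightarrow> real ^ 'n ^ 'n" where
  "diag_mat w = (\<chi> i j. if i = j then w $ i else 0)"

definition skew_symmetric :: "real ^ 'r ^ 'r \<Rightarrow> bool" where
  "skew_symmetric P \<longleftrightarrow> transpose P = - P"

end

theory Submission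
  imports Defs
begin


lemma norm_sq_mat: "(norm (A::real^'a^'b))^2 = (\<Sum>i\<in>UNIV. \<Sum>j\<in>UNIV. (A$i$j)^2)"
proof -
  have "(norm A)^2 = (\<Sum>i\<in>UNIV. (norm (A$i))^2)"
    unfolding norm_vec_def L2_set_def by (simp add: sum_nonneg)
  also have "\<dots> = (\<Sum>i\<in>UNIV. \<Sum>j\<in>UNIV. (A$i$j)^2)"
    by (rule sum.cong, simp, simp add: norm_vec_def L2_set_def sum_nonneg)
  finally show ?thesis .
qed

lemma norm_mm: "norm ((A::real^'k^'m) ** (B::real^'n^'k)) \<le> norm A * norm B"
proof -
  have "(norm (A ** B))^2 = (\<Sum>i\<in>UNIV. \<Sum>j\<in>UNIV. (\<Sum>k\<in>UNIV. A$i$k * B$k$j)^2)"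
    by (simp add: norm_sq_mat matrix_matrix_mult_def)
  also have "\<dots> \<le> (\<Sum>i\<in>UNIV. \<Sum>j\<in>UNIV. (\<Sum>k\<in>UNIV. (A$i$k)^2) * (\<Sum>k\<in>UNIV. (B$k$j)^2))"
    by (intro sum_mono Cauchy_Schwarz_ineq_sum)
  also have "\<dots> = (\<Sum>i\<in>UNIV. \<Sum>k\<in>UNIV. (A$i$k)^2) * (\<Sum>j\<in>UNIV. \<Sum>k\<in>UNIV. (B$k$j)^2)"
    by (simp add: sum_product)
  also have "\<dots> = (norm A)^2 * (norm B)^2"
    by (simp add: norm_sq_mat, subst (2) sum.swap, simp)
  also have "\<dots> = (norm A * norm B)^2" by (simp add: power_mult_distrib)
  finally show ?thesis
    by (meson mult_nonneg_nonneg norm_ge_zero power2_le_imp_le)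
qed

lemma norm_transpose: "norm (transpose (A::real^'a^'b)) = norm A"
proof -
  have "(norm (transpose A))^2 = (norm A)^2"
    by (simp add: norm_sq_mat transpose_def, subst sum.swap, simp)
  then show ?thesis by (simp add: power2_eq_iff_nonneg)
qed

lemma bilinear_mm: "bounded_bilinear (\<lambda>(A::real^'k^'m) (B::real^'n^'k). A ** B)"
proof
  fix a a' :: "real^'k^'m" and b b' :: "real^'n^'k" and r :: real
  show "(a + a') ** b = a ** b + a' ** b"
    by (vector matrix_matrix_mult_def sum.distrib[symmetric] field_simps)
  show "a ** (b + b') = a ** b + a ** b'" by (rule matrix_add_ldistrib)
  show "(r *\<^sub>R a) ** b = r *\<^sub>R (a ** b)" by (simp add: scalar_matrix_assoc)
  show "a ** (r *\<^sub>R b) = r *\<^sub>R (a ** b)" by (simp add: matrix_scalar_ac scalar_matrix_assoc)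
next
  show "\<exists>K. \<forall>a b. norm ((a::real^'k^'m) ** (b::real^'n^'k)) \<le> norm a * norm b * K"
    by (rule exI[of _ 1]) (simp add: norm_mm)
qed

lemma linear_transpose: "bounded_linear (transpose :: real^'a^'b \<Rightarrow> real^'b^'a)"
proof
  fix x y :: "real^'a^'b" and r :: real
  show "transpose (x + y) = transpose x + transpose y" by (vector transpose_def)
  show "transpose (r *\<^sub>R x) = r *\<^sub>R transpose x" by (rule transpose_scalar)
  show "\<exists>K. \<forall>x::real^'a^'b. norm (transpose x) \<le> norm x * K"
    by (rule exI[of _ 1]) (simp add: norm_transpose)
qed

lemma mm_rdistrib: "((A::real^'k^'m) + B) ** (C::real^'n^'k) = A ** C + B ** C"
  by (vector matrix_matrix_mult_def sum.distrib[symmetric] field_simps)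
lemma mm_ldiff: "(A::real^'k^'m) ** ((B::real^'n^'k) - C) = A ** B - A ** C"
  by (vector matrix_matrix_mult_def sum_subtractf[symmetric] field_simps)
lemma mm_rdiff: "((A::real^'k^'m) - B) ** (C::real^'n^'k) = A ** C - B ** C"
  by (vector matrix_matrix_mult_def sum_subtractf[symmetric] field_simps)
lemma mm_lneg: "(- (A::real^'k^'m)) ** (C::real^'n^'k) = - (A ** C)"
  by (vector matrix_matrix_mult_def sum_negf[symmetric])
lemma mm_rneg: "(A::real^'k^'m) ** (- (C::real^'n^'k)) = - (A ** C)"
  by (vector matrix_matrix_mult_def sum_negf[symmetric])
lemma tr_add: "transpose ((A::real^'a^'b) + B) = transpose A + transpose B" by (vector transpose_def)
lemma tr_diff: "transpose ((A::real^'a^'b) - B) = transpose A - transpose B" by (vector transpose_def)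
lemma tr_neg: "transpose (- (A::real^'a^'b)) = - transpose A" by (vector transpose_def)

lemmas mm_simps = matrix_add_ldistrib mm_rdistrib mm_ldiff mm_rdiff mm_lneg mm_rneg
  matrix_mul_assoc tr_add tr_diff tr_neg matrix_transpose_mul

lemma "(A::real^'k^'m) ** (B - C ** D) ** E + A ** C ** (D ** E) = A ** (B ** E)"
  by (simp add: mm_simps)

lemma minv: assumes "invertible (A::real^'r^'r)"
  shows "A ** matrix_inv A = mat 1" "matrix_inv A ** A = mat 1"
  using someI_ex[OF assms[unfolded invertible_def]] unfolding matrix_inv_def by auto

lemma inv_cont:
  fixes Cf :: "real \<Rightarrow> real^'r^'r"
  assumes cont: "continuous_on S Cf" and inv: "\<And>t. t \<in> S \<Longrightarrow> invertible (Cf t)"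
  shows "continuous_on S (\<lambda>t. matrix_inv (Cf t))"
  unfolding continuous_on_iff
proof (intro ballI allI impI)
  fix t0 e assume t0: "t0 \<in> S" and e: "(e::real) > 0"
  define B where "B = matrix_inv (Cf t0)"
  define nb where "nb = norm B + 1"
  have nb: "nb > 0" "norm B \<le> nb" unfolding nb_def by (auto simp: add_nonneg_pos)
  define e' where "e' = min (1 / (2 * nb)) (e / (4 * nb * nb))"
  have e': "e' > 0" unfolding e'_def using nb e by auto
  obtain d where d: "d > 0" and dd: "\<And>t. t \<in> S \<Longrightarrow> dist t t0 < d \<Longrightarrow> dist (Cf t) (Cf t0) < e'"
    using cont t0 e' unfolding continuous_on_iff by metis
  show "\<exists>d>0. \<forall>t\<in>S. dist t t0 < d \<longrightarrow> dist (matrix_inv (Cf t)) (matrix_inv (Cf t0)) < e"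
  proof (intro exI[of _ d] conjI ballI impI d)
    fix t assume t: "t \<in> S" "dist t t0 < d"
    define X where "X = matrix_inv (Cf t)"
    define D where "D = Cf t - Cf t0"
    have nD: "norm D < e'" using dd[OF t] by (simp add: D_def dist_norm)
    have CX: "Cf t ** X = mat 1" using minv[OF inv[OF t(1)]] X_def by simp
    have BC: "B ** Cf t0 = mat 1" using minv[OF inv[OF t0]] B_def by simp
    have eqX: "X = B - B ** D ** X"
    proof -
      have "B ** D ** X = B ** (Cf t ** X) - B ** Cf t0 ** X"
        by (simp add: D_def mm_simps)
      also have "\<dots> = B - X" using CX BC by simp
      finally show ?thesis by simp
    qed
    have nBD: "norm B * norm D \<le> 1/2"
    proof -
      have "norm B * norm D \<le> nb * e'" using nb nD by (intro mult_mono) auto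
      also have "\<dots> \<le> nb * (1 / (2 * nb))" using nb unfolding e'_def
        by (intro mult_left_mono) auto
      finally show ?thesis using nb by simp
    qed
    have "norm X \<le> norm B + norm (B ** D ** X)"
      using eqX norm_triangle_ineq4[of B "B ** D ** X"] by simp
    also have "norm (B ** D ** X) \<le> norm B * norm D * norm X"
      by (meson norm_mm order_trans mult_right_mono norm_ge_zero)
    finally have "norm X \<le> norm B + norm B * norm D * norm X" by simp
    moreover have "norm B * norm D * norm X \<le> 1/2 * norm X"
      using nBD by (intro mult_right_mono) auto
    ultimately have nX: "norm X \<le> 2 * nb" using nb by simp
    have "X - B = - (B ** D ** X)" using arg_cong[OF eqX, of "\<lambda>Z. Z - B"] by simp
    then have "dist X B = norm (B ** D ** X)" by (simp add: dist_norm)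
    also have "\<dots> \<le> norm B * norm D * norm X"
      by (meson norm_mm order_trans mult_right_mono norm_ge_zero)
    also have "\<dots> \<le> nb * e' * (2 * nb)"
      using nb nD nX e' by (intro mult_mono) auto
    also have "\<dots> \<le> nb * (e / (4 * nb * nb)) * (2 * nb)"
      using nb e unfolding e'_def by (intro mult_mono) auto
    also have "\<dots> = e / 2" using nb by (simp add: field_simps)
    finally have "dist X B \<le> e / 2" .
    then show "dist (matrix_inv (Cf t)) (matrix_inv (Cf t0)) < e"
      using e X_def B_def by simp
  qed
qed

lemma deriv_factor:
  fixes f :: "real \<Rightarrow> real^'a^'b" and G :: "real \<Rightarrow> real^'c^'b"
    and h :: "real \<Rightarrow> real^'d^'c" and K :: "real^'a^'d"
  assumes eq: "\<And>y. y \<in> S \<Longrightarrow> f y - f x = G y ** (h y - h x) ** K"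
    and Gc: "continuous (at x within S) G"
    and hd: "(h has_vector_derivative h') (at x within S)"
  shows "(f has_vector_derivative (G x ** h' ** K)) (at x within S)"
proof -
  define Q where "Q y = (1 / norm (y - x)) *\<^sub>R (h y - (h x + (y - x) *\<^sub>R h'))" for y
  have LQ: "(Q \<longlongrightarrow> 0) (at x within S)"
    using hd unfolding has_vector_derivative_def has_derivative_within Q_def by simp
  have LG: "(G \<longlongrightarrow> G x) (at x within S)" using Gc by (simp add: continuous_within)
  have T1: "((\<lambda>y. G y ** Q y ** K) \<longlongrightarrow> G x ** 0 ** K) (at x within S)"
    by (intro bounded_bilinear.tendsto[OF bilinear_mm] LG LQ tendsto_const)
  have T2a: "((\<lambda>y. (G y - G x) ** h' ** K) \<longlongrightarrow> (G x - G x) ** h' ** K) (at x within S)"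
    by (intro bounded_bilinear.tendsto[OF bilinear_mm] LG tendsto_const tendsto_diff)
  have T2: "((\<lambda>y. (1 / norm (y - x)) *\<^sub>R ((y - x) *\<^sub>R ((G y - G x) ** h' ** K))) \<longlongrightarrow> 0) (at x within S)"
  proof (rule tendsto_0_le[where K=1])
    show "((\<lambda>y. (G y - G x) ** h' ** K) \<longlongrightarrow> 0) (at x within S)" using T2a by simp
    show "\<forall>\<^sub>F y in at x within S. norm ((1 / norm (y - x)) *\<^sub>R ((y - x) *\<^sub>R ((G y - G x) ** h' ** K)))
        \<le> norm ((G y - G x) ** h' ** K) * 1"
      by (rule always_eventually) simp
  qed
  have "((\<lambda>y. G y ** Q y ** K + (1 / norm (y - x)) *\<^sub>R ((y - x) *\<^sub>R ((G y - G x) ** h' ** K))) \<longlongrightarrow> 0) (at x within S)"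
    using tendsto_add[OF T1 T2] by simp
  moreover have "\<forall>\<^sub>F y in at x within S. G y ** Q y ** K + (1 / norm (y - x)) *\<^sub>R ((y - x) *\<^sub>R ((G y - G x) ** h' ** K))
     = (1 / norm (y - x)) *\<^sub>R (f y - (f x + (y - x) *\<^sub>R (G x ** h' ** K)))"
  proof -
    have "G y ** Q y ** K + (1 / norm (y - x)) *\<^sub>R ((y - x) *\<^sub>R ((G y - G x) ** h' ** K))
     = (1 / norm (y - x)) *\<^sub>R (f y - (f x + (y - x) *\<^sub>R (G x ** h' ** K)))" if y: "y \<in> S" for y
    proof -
      have "f y - (f x + (y - x) *\<^sub>R (G x ** h' ** K)) = G y ** (h y - h x) ** K - (y - x) *\<^sub>R (G x ** h' ** K)"
        using eq[OF y] by (simp add: algebra_simps)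
      then show ?thesis unfolding Q_def
        apply (simp add: mm_simps matrix_scalar_ac scalar_matrix_assoc[symmetric] algebra_simps scaleR_right_diff_distrib)
        by (metis scaleR_add_right)
    qed
    then show ?thesis by (auto simp: eventually_at_filter)
  qed
  ultimately have "((\<lambda>y. (1 / norm (y - x)) *\<^sub>R (f y - (f x + (y - x) *\<^sub>R (G x ** h' ** K)))) \<longlongrightarrow> 0) (at x within S)"
    by (rule Lim_transform_eventually)
  then show ?thesis
    unfolding has_vector_derivative_def has_derivative_within
    by (simp add: bounded_linear_scaleR_left)
qed

lemma inv_deriv:
  fixes Cf :: "real \<Rightarrow> real^'r^'r"
  assumes inv: "\<And>t. t \<in> S \<Longrightarrow> invertible (Cf t)" and cont: "continuous_on S Cf" and x: "x \<in> S"
    and d: "(Cf has_vector_derivative C') (at x within S)"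
  shows "((\<lambda>t. matrix_inv (Cf t)) has_vector_derivative (- matrix_inv (Cf x) ** C' ** matrix_inv (Cf x))) (at x within S)"
proof -
  have "((\<lambda>t. matrix_inv (Cf t)) has_vector_derivative ((\<lambda>t. - matrix_inv (Cf t)) x ** C' ** matrix_inv (Cf x))) (at x within S)"
  proof (rule deriv_factor[where h=Cf])
    fix y assume y: "y \<in> S"
    show "matrix_inv (Cf y) - matrix_inv (Cf x) = - matrix_inv (Cf y) ** (Cf y - Cf x) ** matrix_inv (Cf x)"
      using minv[OF inv[OF y]] minv[OF inv[OF x]]
      by (simp add: mm_simps matrix_mul_assoc[symmetric])
  next
    show "continuous (at x within S) (\<lambda>t. - matrix_inv (Cf t))"
      using inv_cont[OF cont inv] x
      by (intro continuous_intros) (simp add: continuous_on_eq_continuous_within)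
  qed (rule d)
  then show ?thesis by simp
qed

lemma gronwall_zero:
  fixes e :: "real \<Rightarrow> 'a::real_inner"
  assumes der: "\<And>t. t \<in> {0..a} \<Longrightarrow> (e has_vector_derivative e' t) (at t within {0..a})"
    and bd: "\<And>t. t \<in> {0..a} \<Longrightarrow> norm (e' t) \<le> c * norm (e t)" and e0: "e 0 = 0"
    and t: "t \<in> {0..a}"
  shows "e t = 0"
proof -
  define L where "L = \<bar>c\<bar>"
  have bdL: "norm (e' s) \<le> L * norm (e s)" if "s \<in> {0..a}" for s
    using bd[OF that] unfolding L_def by (meson abs_ge_self mult_right_mono norm_ge_zero order_trans)
  define g where "g s = exp (- (2 * L) * s) * (e s \<bullet> e s)" for s
  define g' where "g' s = exp (- (2 * L) * s) * (e s \<bullet> e' s + e' s \<bullet> e s) + (- (2 * L)) * exp (- (2 * L) * s) * (e s \<bullet> e s)" for s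
  have gd: "(g has_real_derivative g' s) (at s within {0..t})" if s: "s \<in> {0..t}" for s
  proof -
    have s': "s \<in> {0..a}" using s t by auto
    have "((\<lambda>s. e s \<bullet> e s) has_vector_derivative (e s \<bullet> e' s + e' s \<bullet> e s)) (at s within {0..a})"
      using bounded_bilinear.has_vector_derivative[OF bounded_bilinear_inner der[OF s'] der[OF s']] .
    then have "((\<lambda>s. e s \<bullet> e s) has_real_derivative (e s \<bullet> e' s + e' s \<bullet> e s)) (at s within {0..a})"
      by (simp add: has_real_derivative_iff_has_vector_derivative)
    then have "((\<lambda>s. e s \<bullet> e s) has_real_derivative (e s \<bullet> e' s + e' s \<bullet> e s)) (at s within {0..t})"
      by (rule DERIV_subset) (use t in auto)
    moreover have "((\<lambda>s. exp (- (2 * L) * s)) has_real_derivative (- (2 * L)) * exp (- (2 * L) * s)) (at s within {0..t})"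
      by (auto intro!: derivative_eq_intros)
    ultimately show ?thesis unfolding g_def g'_def
      by (auto intro!: derivative_eq_intros simp: algebra_simps)
  qed
  have tt: "0 \<le> t" using t by auto
  obtain x where x: "x \<in> {0..t}" and mv: "g t - g 0 = (\<lambda>h. g' x * h) (t - 0)"
    using mvt_very_simple[OF tt, of g "\<lambda>s h. g' s * h"] gd unfolding has_field_derivative_def
    by (metis atLeastAtMost_iff mult.commute)
  have x': "x \<in> {0..a}" using x t by auto
  have "e x \<bullet> e' x \<le> norm (e x) * norm (e' x)" by (rule norm_cauchy_schwarz)
  also have "\<dots> \<le> norm (e x) * (L * norm (e x))" by (intro mult_left_mono bdL[OF x']) auto
  also have "norm (e x) * (L * norm (e x)) = L * (e x \<bullet> e x)"
    by (simp add: dot_square_norm power2_eq_square)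
  finally have "e x \<bullet> e' x \<le> L * (e x \<bullet> e x)" .
  then have "g' x \<le> 0" unfolding g'_def by (simp add: inner_commute algebra_simps mult_left_mono)
  then have "g' x * t \<le> 0" using tt by (simp add: mult_nonpos_nonneg)
  then have "g t \<le> g 0" using mv by simp
  moreover have "g 0 = 0" unfolding g_def using e0 by simp
  ultimately have "e t \<bullet> e t \<le> 0" unfolding g_def by (simp add: mult_le_0_iff)
  then show ?thesis by (metis inner_eq_zero_iff inner_ge_zero order_antisym)
qed



lemma alg_R:
  fixes U Ut :: "real^'r^'n" and Y Yt :: "real^'r^'s" and A :: "real^'s^'n"
    and W :: "real^'n^'n" and P :: "real^'s^'s" and ph pht Cti Ct :: "real^'r^'r"
  assumes CC: "Cti ** Ct = mat 1" "Ct ** Cti = mat 1"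
    and sym: "transpose W = W" "transpose P = P"
    and sk: "transpose pht = - pht"
    and Ct: "Ct = transpose Yt ** P ** Yt"
  shows "- (Cti ** (transpose (transpose A ** W ** Ut + Yt ** pht) ** P ** Yt + transpose Yt ** P ** (transpose A ** W ** Ut + Yt ** pht)) ** Cti)
            ** transpose Yt ** P ** Y
         + Cti ** transpose (transpose A ** W ** Ut + Yt ** pht) ** P ** Y
         + Cti ** transpose Yt ** P ** (transpose A ** W ** U + Y ** ph)
       = (Cti ** transpose Yt ** P ** Y) ** ph - pht ** (Cti ** transpose Yt ** P ** Y)
         + Cti ** (transpose Ut ** W ** A ** P ** (Y - Yt ** (Cti ** transpose Yt ** P ** Y))
                   + transpose Yt ** P ** transpose A ** W ** (U - Ut ** (Cti ** transpose Yt ** P ** Y)))"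
proof -
  have CC': "Z ** Cti ** Ct = Z" "Z' ** Ct ** Cti = Z'" for Z Z' :: "real^'r^'r"
    using CC by (simp_all add: matrix_mul_assoc[symmetric])
  have e1: "Z ** transpose Yt ** P ** Yt ** Cti = Z" for Z :: "real^'r^'r"
    using CC'(2)[of Z] unfolding Ct by (simp add: matrix_mul_assoc)
  have e2: "transpose Yt ** P ** Yt ** Cti = mat 1"
    using CC(2) unfolding Ct .
  have e3: "Cti ** transpose Yt ** P ** Yt = mat 1"
    using CC(1) unfolding Ct by (simp add: matrix_mul_assoc)
  have e4: "Z ** Cti ** transpose Yt ** P ** Yt = Z" for Z :: "real^'r^'r"
    using CC'(1)[of Z] unfolding Ct by (simp add: matrix_mul_assoc)
  show ?thesis
    using sym sk by (simp add: mm_simps e1 e2 e3 e4 CC CC' algebra_simps)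
qed

lemma alg_DU:
  fixes U Ut :: "real^'r^'n" and Y Yt :: "real^'r^'s" and A :: "real^'s^'n"
    and W :: "real^'n^'n" and P :: "real^'s^'s" and ph pht Ci Cti R X :: "real^'r^'r"
  shows "((mat 1 - U ** transpose U ** W) ** A ** P ** Y ** Ci + U ** ph)
     - (Ut ** (R ** ph - pht ** R + X) + ((mat 1 - Ut ** transpose Ut ** W) ** A ** P ** Yt ** Cti + Ut ** pht) ** R)
   = (mat 1 - U ** transpose U ** W) ** A ** P ** (Y ** Ci - Yt ** Cti ** R)
     - (U ** transpose U - Ut ** transpose Ut) ** W ** A ** P ** Yt ** Cti ** R
     + (U - Ut ** R) ** ph - Ut ** X"
  by (simp add: mm_simps algebra_simps)

lemma alg_DY:
  fixes U Ut :: "real^'r^'n" and Y Yt :: "real^'r^'s" and A :: "real^'s^'n"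
    and W :: "real^'n^'n" and ph pht R X :: "real^'r^'r"
  shows "(transpose A ** W ** U + Y ** ph) - (Yt ** (R ** ph - pht ** R + X) + (transpose A ** W ** Ut + Yt ** pht) ** R)
    = transpose A ** W ** (U - Ut ** R) + (Y - Yt ** R) ** ph - Yt ** X"
  by (simp add: mm_simps algebra_simps)

lemma alg_E:
  fixes ph pht R X :: "real^'r^'r"
  assumes "transpose ph = - ph" "transpose pht = - pht"
  shows "R ** transpose (R ** ph - pht ** R + X) + (R ** ph - pht ** R + X) ** transpose R
    = - pht ** (R ** transpose R - mat 1) + (R ** transpose R - mat 1) ** pht + X ** transpose R + R ** transpose X"
  using assms by (simp add: mm_simps algebra_simps)

lemma alg_H:
  fixes U Ut :: "real^'r^'n" and R :: "real^'r^'r"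
  shows "U ** transpose U - Ut ** transpose Ut
    = Ut ** (R ** transpose R - mat 1) ** transpose Ut + Ut ** R ** transpose (U - Ut ** R) + (U - Ut ** R) ** transpose U"
  by (simp add: mm_simps algebra_simps)

lemma cancel_r: "(A::real^'r^'r) ** B = mat 1 \<Longrightarrow> (Z::real^'r^'k) ** A ** B = Z"
  by (metis matrix_mul_assoc matrix_mul_rid)

lemma alg_G:
  fixes Y Yt :: "real^'r^'s" and P :: "real^'s^'s" and Ci Cti Ct R :: "real^'r^'r"
  assumes CC: "Cti ** Ct = mat 1" "(transpose Y ** P ** Y) ** Ci = mat 1"
    and KR: "Ct ** R = transpose Yt ** P ** Y"
  shows "Y ** Ci - Yt ** Cti ** R
    = ((Y - Yt ** R) - Yt ** Cti ** (R ** transpose R - mat 1) ** Ct ** R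
       - Yt ** Cti ** R ** transpose (Y - Yt ** R) ** P ** Y) ** Ci"
proof -
  have e1: "Z ** Cti ** Ct = Z" for Z :: "real^'r^'s"
    using cancel_r[OF CC(1), of Z] by (simp_all add: matrix_mul_assoc)
  have e3: "Z ** transpose Y ** P ** Y ** Ci = Z" for Z :: "real^'r^'s"
    using cancel_r[OF CC(2), of Z] by (simp_all add: matrix_mul_assoc)
  have e4: "Z ** transpose Yt ** P ** Y = Z ** Ct ** R" for Z :: "real^'r^'s"
    using KR by (simp add: matrix_mul_assoc[symmetric])
  show ?thesis
    by (simp add: mm_simps algebra_simps e1 e3 e4)
qed



definition Sm :: "real set \<Rightarrow> (real \<Rightarrow> real) \<Rightarrow> (real \<Rightarrow> 'a::real_normed_vector) \<Rightarrow> bool" where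
  "Sm S ep f \<longleftrightarrow> (\<exists>c. \<forall>t\<in>S. norm (f t) \<le> c * ep t)"

lemma Sm_base: "(\<And>t. t \<in> S \<Longrightarrow> norm (f t) \<le> ep t) \<Longrightarrow> Sm S ep f"
  unfolding Sm_def by (rule exI[of _ 1]) auto

lemma Sm_add: "Sm S ep f \<Longrightarrow> Sm S ep g \<Longrightarrow> Sm S ep (\<lambda>t. f t + g t)"
  unfolding Sm_def
proof (elim exE)
  fix c d assume c: "\<forall>t\<in>S. norm (f t) \<le> c * ep t" and d: "\<forall>t\<in>S. norm (g t) \<le> d * ep t"
  show "\<exists>c. \<forall>t\<in>S. norm (f t + g t) \<le> c * ep t"
  proof (intro exI[of _ "c + d"] ballI)
    fix t assume t: "t \<in> S"
    then show "norm (f t + g t) \<le> (c + d) * ep t"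
      using c[rule_format, OF t] d[rule_format, OF t] norm_triangle_ineq[of "f t" "g t"]
      by (simp add: algebra_simps)
  qed
qed

lemma Sm_neg: "Sm S ep f \<Longrightarrow> Sm S ep (\<lambda>t. - f t)"
  unfolding Sm_def by simp

lemma Sm_diff: "Sm S ep f \<Longrightarrow> Sm S ep g \<Longrightarrow> Sm S ep (\<lambda>t. f t - g t)"
  using Sm_add[of S ep f "\<lambda>t. - g t"] Sm_neg[of S ep g] by simp

lemma Sm_tr: "Sm S ep f \<Longrightarrow> Sm S ep (\<lambda>t. transpose (f t :: real^'a^'b))"
  unfolding Sm_def by (simp add: norm_transpose)

lemma Sm_pair: "Sm S ep f \<Longrightarrow> Sm S ep g \<Longrightarrow> Sm S ep (\<lambda>t. (f t, g t))"
  unfolding Sm_def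
proof (elim exE)
  fix c d assume c: "\<forall>t\<in>S. norm (f t) \<le> c * ep t" and d: "\<forall>t\<in>S. norm (g t) \<le> d * ep t"
  show "\<exists>c. \<forall>t\<in>S. norm (f t, g t) \<le> c * ep t"
  proof (intro exI[of _ "c + d"] ballI)
    fix t assume t: "t \<in> S"
    have "norm (f t, g t) \<le> norm (f t) + norm (g t)"
      unfolding norm_Pair using sqrt_sum_squares_le_sum_abs[of "norm (f t)" "norm (g t)"] by simp
    then show "norm (f t, g t) \<le> (c + d) * ep t"
      using c[rule_format, OF t] d[rule_format, OF t] by (simp add: algebra_simps)
  qed
qed

lemma cont_bound:
  assumes "compact S" "continuous_on S f"
  obtains M where "M \<ge> 0" "\<And>t. t \<in> S \<Longrightarrow> norm (f t) \<le> M"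
proof -
  have "bounded (f ` S)" using assms compact_continuous_image compact_imp_bounded by blast
  then obtain M where "M > 0" "\<And>x. x \<in> f ` S \<Longrightarrow> norm x \<le> M" by (auto simp: bounded_pos)
  then show ?thesis using that[of M] by auto
qed

lemma Sm_mml:
  fixes f :: "real \<Rightarrow> real^'k^'m" and g :: "real \<Rightarrow> real^'n^'k"
  assumes S: "compact S" and fc: "continuous_on S f" and g: "Sm S ep g"
  shows "Sm S ep (\<lambda>t. f t ** g t)"
proof -
  obtain M where M: "M \<ge> 0" "\<And>t. t \<in> S \<Longrightarrow> norm (f t) \<le> M" using cont_bound[OF S fc] by blast
  obtain c where c: "\<forall>t\<in>S. norm (g t) \<le> c * ep t" using g unfolding Sm_def by blast
  show ?thesis unfolding Sm_def
  proof (intro exI[of _ "M * c"] ballI)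
    fix t assume t: "t \<in> S"
    have "norm (f t ** g t) \<le> norm (f t) * norm (g t)" by (rule norm_mm)
    also have "\<dots> \<le> M * (c * ep t)" using M(1) M(2)[OF t] c t by (intro mult_mono) auto
    finally show "norm (f t ** g t) \<le> M * c * ep t" by simp
  qed
qed

lemma Sm_mmr:
  fixes f :: "real \<Rightarrow> real^'k^'m" and g :: "real \<Rightarrow> real^'n^'k"
  assumes S: "compact S" and f: "Sm S ep f" and gc: "continuous_on S g"
  shows "Sm S ep (\<lambda>t. f t ** g t)"
proof -
  obtain M where M: "M \<ge> 0" "\<And>t. t \<in> S \<Longrightarrow> norm (g t) \<le> M" using cont_bound[OF S gc] by blast
  obtain c where c: "\<forall>t\<in>S. norm (f t) \<le> c * ep t" using f unfolding Sm_def by blast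
  show ?thesis unfolding Sm_def
  proof (intro exI[of _ "M * c"] ballI)
    fix t assume t: "t \<in> S"
    have "norm (f t ** g t) \<le> norm (f t) * norm (g t)" by (rule norm_mm)
    also have "\<dots> = norm (g t) * norm (f t)" by simp
    also have "\<dots> \<le> M * (c * ep t)" using M(1) M(2)[OF t] c t by (intro mult_mono) auto
    finally show "norm (f t ** g t) \<le> M * c * ep t" by simp
  qed
qed

lemma cont_mm[continuous_intros]:
  fixes f :: "real \<Rightarrow> real^'k^'m" and g :: "real \<Rightarrow> real^'n^'k"
  shows "continuous_on S f \<Longrightarrow> continuous_on S g \<Longrightarrow> continuous_on S (\<lambda>t. f t ** g t)"
  by (rule bounded_bilinear.continuous_on[OF bilinear_mm])

lemma cont_tr[continuous_intros]:
  fixes f :: "real \<Rightarrow> real^'k^'m"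
  shows "continuous_on S f \<Longrightarrow> continuous_on S (\<lambda>t. transpose (f t))"
  by (rule bounded_linear.continuous_on[OF linear_transpose])

lemma d_mm:
  fixes f :: "real \<Rightarrow> real^'k^'m" and g :: "real \<Rightarrow> real^'n^'k"
  shows "(f has_vector_derivative f') (at x within s) \<Longrightarrow> (g has_vector_derivative g') (at x within s)
    \<Longrightarrow> ((\<lambda>x. f x ** g x) has_vector_derivative (f x ** g' + f' ** g x)) (at x within s)"
  by (rule bounded_bilinear.has_vector_derivative[OF bilinear_mm])

lemma d_tr:
  fixes f :: "real \<Rightarrow> real^'k^'m"
  shows "(f has_vector_derivative f') F \<Longrightarrow> ((\<lambda>x. transpose (f x)) has_vector_derivative transpose f') F"
  by (rule bounded_linear.has_vector_derivative[OF linear_transpose])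

lemma diag_sym: "transpose (diag_mat w) = diag_mat w"
  unfolding diag_mat_def transpose_def by (vector)



theorem mainTheorem1:
  fixes wx :: "real ^ 'n" and wxi :: "real ^ 's"
    and T Td :: "real \<Rightarrow> real ^ 's ^ 'n"
    and U Ut :: "real \<Rightarrow> real ^ 'r ^ 'n"
    and Y Yt :: "real \<Rightarrow> real ^ 'r ^ 's"
    and phi phit :: "real \<Rightarrow> real ^ 'r ^ 'r"
    and R0 :: "real ^ 'r ^ 'r"
  defines "Wx \<equiv> diag_mat wx" and "Wxi \<equiv> diag_mat wxi"
  assumes wx_pos: "\<And>i. wx $ i > 0" and wxi_pos: "\<And>i. wxi $ i > 0"
    and T_deriv: "\<And>t. t \<ge> 0 \<Longrightarrow> (T has_vector_derivative Td t) (at t within {0..})"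
    and Td_cont: "continuous_on {0..} Td"
    and phi_cont: "continuous_on {0..} phi" and phit_cont: "continuous_on {0..} phit"
    and phi_skew: "\<And>t. t \<ge> 0 \<Longrightarrow> skew_symmetric (phi t)"
    and phit_skew: "\<And>t. t \<ge> 0 \<Longrightarrow> skew_symmetric (phit t)"
    and C_inv: "\<And>t. t \<ge> 0 \<Longrightarrow> invertible (transpose (Y t) ** Wxi ** Y t)"
    and Ct_inv: "\<And>t. t \<ge> 0 \<Longrightarrow> invertible (transpose (Yt t) ** Wxi ** Yt t)"
    and U_ode: "\<And>t. t \<ge> 0 \<Longrightarrow> (U has_vector_derivative
        ((mat 1 - U t ** transpose (U t) ** Wx) ** Td t ** Wxi ** Y t
           ** matrix_inv (transpose (Y t) ** Wxi ** Y t) + U t ** phi t)) (at t within {0..})"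
    and Y_ode: "\<And>t. t \<ge> 0 \<Longrightarrow> (Y has_vector_derivative
        (transpose (Td t) ** Wx ** U t + Y t ** phi t)) (at t within {0..})"
    and Ut_ode: "\<And>t. t \<ge> 0 \<Longrightarrow> (Ut has_vector_derivative
        ((mat 1 - Ut t ** transpose (Ut t) ** Wx) ** Td t ** Wxi ** Yt t
           ** matrix_inv (transpose (Yt t) ** Wxi ** Yt t) + Ut t ** phit t)) (at t within {0..})"
    and Yt_ode: "\<And>t. t \<ge> 0 \<Longrightarrow> (Yt has_vector_derivative
        (transpose (Td t) ** Wx ** Ut t + Yt t ** phit t)) (at t within {0..})"
    and R0_orth: "transpose R0 ** R0 = mat 1"
    and init: "U 0 = Ut 0 ** R0" "Y 0 = Yt 0 ** R0"
  shows "\<exists>R :: real \<Rightarrow> real ^ 'r ^ 'r. R 0 = R0 \<and>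
    (\<forall>t\<ge>0. (R has_vector_derivative (R t ** phi t - phit t ** R t)) (at t within {0..})) \<and>
    (\<forall>t>0. orthogonal_matrix (R t) \<and> U t = Ut t ** R t \<and> Y t = Yt t ** R t)"
proof -
  let ?S = "{0..} :: real set"
  have Wsym: "transpose Wx = Wx" "transpose Wxi = Wxi" unfolding Wx_def Wxi_def by (rule diag_sym)+
  have sk: "transpose (phi t) = - phi t" "transpose (phit t) = - phit t" if "t \<ge> 0" for t
    using phi_skew[OF that] phit_skew[OF that] unfolding skew_symmetric_def by auto
  define C where "C t = transpose (Y t) ** Wxi ** Y t" for t
  define Ct where "Ct t = transpose (Yt t) ** Wxi ** Yt t" for t
  define Ci where "Ci t = matrix_inv (C t)" for t
  define Cti where "Cti t = matrix_inv (Ct t)" for t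
  define R where "R t = Cti t ** transpose (Yt t) ** Wxi ** Y t" for t
  define DU where "DU t = U t - Ut t ** R t" for t
  define DY where "DY t = Y t - Yt t ** R t" for t
  define E where "E t = R t ** transpose (R t) - mat 1" for t
  define X where "X t = Cti t ** (transpose (Ut t) ** Wx ** Td t ** Wxi ** DY t
                   + transpose (Yt t) ** Wxi ** transpose (Td t) ** Wx ** DU t)" for t
  define Ud where "Ud t = (mat 1 - U t ** transpose (U t) ** Wx) ** Td t ** Wxi ** Y t ** Ci t + U t ** phi t" for t
  define Utd where "Utd t = (mat 1 - Ut t ** transpose (Ut t) ** Wx) ** Td t ** Wxi ** Yt t ** Cti t + Ut t ** phit t" for t
  define Yd where "Yd t = transpose (Td t) ** Wx ** U t + Y t ** phi t" for t
  define Ytd where "Ytd t = transpose (Td t) ** Wx ** Ut t + Yt t ** phit t" for t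
  have dU: "(U has_vector_derivative Ud t) (at t within ?S)" if "t \<ge> 0" for t
    using U_ode[OF that] unfolding Ud_def Ci_def C_def .
  have dUt: "(Ut has_vector_derivative Utd t) (at t within ?S)" if "t \<ge> 0" for t
    using Ut_ode[OF that] unfolding Utd_def Cti_def Ct_def .
  have dY: "(Y has_vector_derivative Yd t) (at t within ?S)" if "t \<ge> 0" for t
    using Y_ode[OF that] unfolding Yd_def .
  have dYt: "(Yt has_vector_derivative Ytd t) (at t within ?S)" if "t \<ge> 0" for t
    using Yt_ode[OF that] unfolding Ytd_def .
  have cU: "continuous_on ?S U" using dU
    by (auto simp: continuous_on_eq_continuous_within intro: has_vector_derivative_continuous)
  have cUt: "continuous_on ?S Ut" using dUt
    by (auto simp: continuous_on_eq_continuous_within intro: has_vector_derivative_continuous)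
  have cY: "continuous_on ?S Y" using dY
    by (auto simp: continuous_on_eq_continuous_within intro: has_vector_derivative_continuous)
  have cYt: "continuous_on ?S Yt" using dYt
    by (auto simp: continuous_on_eq_continuous_within intro: has_vector_derivative_continuous)
  have cC: "continuous_on ?S C" unfolding C_def by (intro continuous_intros cY)
  have cCt: "continuous_on ?S Ct" unfolding Ct_def by (intro continuous_intros cYt)
  have iC: "invertible (C t)" "invertible (Ct t)" if "t \<ge> 0" for t
    using C_inv[OF that] Ct_inv[OF that] unfolding C_def Ct_def by auto
  have cCi: "continuous_on ?S Ci" unfolding Ci_def by (rule inv_cont[OF cC]) (use iC in auto)
  have cCti: "continuous_on ?S Cti" unfolding Cti_def by (rule inv_cont[OF cCt]) (use iC in auto)
  have CC: "C t ** Ci t = mat 1" "Ci t ** C t = mat 1" "Ct t ** Cti t = mat 1" "Cti t ** Ct t = mat 1"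
    if "t \<ge> 0" for t
    using minv[OF iC(1)[OF that]] minv[OF iC(2)[OF that]] unfolding Ci_def Cti_def by auto
  have cR: "continuous_on ?S R" unfolding R_def by (intro continuous_intros cY cYt cCti)
  have KR: "Ct t ** R t = transpose (Yt t) ** Wxi ** Y t" if "t \<ge> 0" for t
    unfolding R_def using cancel_r[OF CC(3)[OF that]] by (metis matrix_mul_assoc matrix_mul_lid CC(3)[OF that])
  define Ctd where "Ctd t = transpose (Ytd t) ** Wxi ** Yt t + transpose (Yt t) ** Wxi ** Ytd t" for t
  have dCt: "(Ct has_vector_derivative Ctd t) (at t within ?S)" if t: "t \<ge> 0" for t
    unfolding Ct_def
    apply (rule has_vector_derivative_eq_rhs)
     apply (rule d_mm d_tr has_vector_derivative_const dYt[OF t])+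
    by (simp add: Ctd_def mm_simps)
  have dCti: "(Cti has_vector_derivative (- Cti t ** Ctd t ** Cti t)) (at t within ?S)" if t: "t \<ge> 0" for t
    unfolding Cti_def by (rule inv_deriv[OF _ cCt _ dCt[OF t]]) (use iC t in auto)
  define Rd where "Rd t = R t ** phi t - phit t ** R t + X t" for t
  have dR: "(R has_vector_derivative Rd t) (at t within ?S)" if t: "t \<ge> 0" for t
    unfolding R_def
    apply (rule has_vector_derivative_eq_rhs)
     apply (rule d_mm d_tr has_vector_derivative_const dYt[OF t] dY[OF t] dCti[OF t])+
    unfolding Rd_def X_def DU_def DY_def R_def
    apply (rule trans[OF _ alg_R[where U="U t" and Ut="Ut t" and Y="Y t" and Yt = "Yt t" and A="Td t"
          and W=Wx and P=Wxi and ph="phi t" and pht="phit t" and Cti="Cti t" and Ct="Ct t"]])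
    using CC[OF t] Wsym sk[OF t] by (simp_all add: Ct_def Ctd_def Ytd_def Yd_def mm_simps)
  define Gd where "Gd t = (DY t - Yt t ** Cti t ** E t ** Ct t ** R t - Yt t ** Cti t ** R t ** transpose (DY t) ** Wxi ** Y t) ** Ci t" for t
  define Hd where "Hd t = Ut t ** E t ** transpose (Ut t) + Ut t ** R t ** transpose (DU t) + DU t ** transpose (U t)" for t
  define DUd where "DUd t = (mat 1 - U t ** transpose (U t) ** Wx) ** Td t ** Wxi ** Gd t
      - Hd t ** Wx ** Td t ** Wxi ** Yt t ** Cti t ** R t + DU t ** phi t - Ut t ** X t" for t
  define DYd where "DYd t = transpose (Td t) ** Wx ** DU t + DY t ** phi t - Yt t ** X t" for t
  define Ed where "Ed t = - phit t ** E t + E t ** phit t + X t ** transpose (R t) + R t ** transpose (X t)" for t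
  have dDU: "(DU has_vector_derivative DUd t) (at t within ?S)" if t: "t \<ge> 0" for t
  proof -
    have G: "Y t ** Ci t - Yt t ** Cti t ** R t = Gd t"
      unfolding Gd_def DY_def E_def
      by (rule alg_G[OF CC(4)[OF t] _ KR[OF t]]) (use CC(1)[OF t] in \<open>simp add: C_def\<close>)
    have H: "U t ** transpose (U t) - Ut t ** transpose (Ut t) = Hd t"
      unfolding Hd_def DU_def E_def by (rule alg_H)
    have "Ud t - (Ut t ** Rd t + Utd t ** R t) = DUd t"
      unfolding Ud_def Utd_def Rd_def alg_DU G H
      by (simp add: DUd_def DU_def)
    then show ?thesis unfolding DU_def
      by (rule has_vector_derivative_eq_rhs[OF has_vector_derivative_diff[OF dU[OF t] d_mm[OF dUt[OF t] dR[OF t]]]])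
  qed
  have dDY: "(DY has_vector_derivative DYd t) (at t within ?S)" if t: "t \<ge> 0" for t
  proof -
    have "Yd t - (Yt t ** Rd t + Ytd t ** R t) = DYd t"
      unfolding Yd_def Ytd_def Rd_def alg_DY by (simp add: DYd_def DU_def DY_def)
    then show ?thesis unfolding DY_def
      by (rule has_vector_derivative_eq_rhs[OF has_vector_derivative_diff[OF dY[OF t] d_mm[OF dYt[OF t] dR[OF t]]]])
  qed
  have dE: "(E has_vector_derivative Ed t) (at t within ?S)" if t: "t \<ge> 0" for t
  proof -
    have "(R t ** transpose (Rd t) + Rd t ** transpose (R t)) - 0 = Ed t"
      unfolding Rd_def alg_E[OF sk[OF t]] by (simp add: Ed_def E_def)
    then show ?thesis unfolding E_def
      by (rule has_vector_derivative_eq_rhs[OF has_vector_derivative_diff[OF d_mm[OF dR[OF t] d_tr[OF dR[OF t]]] has_vector_derivative_const]])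
  qed
  define e where "e t = (DU t, DY t, E t)" for t
  define ed where "ed t = (DUd t, DYd t, Ed t)" for t
  have de: "(e has_vector_derivative ed t) (at t within ?S)" if t: "t \<ge> 0" for t
    unfolding e_def ed_def by (intro has_vector_derivative_Pair dDU dDY dE t)
  have e0: "e t = 0" if t: "t \<ge> 0" for t
  proof -
    define S where "S = {0..t}"
    define ep where "ep s = norm (e s)" for s
    have cpt: "compact S" unfolding S_def by simp
    have sub: "S \<subseteq> ?S" unfolding S_def by auto
    have cS: "continuous_on S f" if "continuous_on ?S f" for f :: "real \<Rightarrow> real^'r^'n"
      using continuous_on_subset[OF that sub] .
    have cS2: "continuous_on S f" if "continuous_on ?S f" for f :: "real \<Rightarrow> real^'r^'s"
      using continuous_on_subset[OF that sub] .
    have cS3: "continuous_on S f" if "continuous_on ?S f" for f :: "real \<Rightarrow> real^'r^'r"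
      using continuous_on_subset[OF that sub] .
    have cS4: "continuous_on S f" if "continuous_on ?S f" for f :: "real \<Rightarrow> real^'s^'n"
      using continuous_on_subset[OF that sub] .
    note cb = cS[OF cU] cS[OF cUt] cS2[OF cY] cS2[OF cYt] cS3[OF cCi] cS3[OF cCti] cS3[OF cCt] cS3[OF cR]
      cS3[OF phi_cont] cS3[OF phit_cont] cS4[OF Td_cont]
    note ci = cont_mm cont_tr continuous_on_const continuous_on_diff continuous_on_add continuous_on_minus
    have sDU: "Sm S ep DU" unfolding ep_def e_def by (rule Sm_base) (rule norm_fst_le)
    have sDY: "Sm S ep DY" unfolding ep_def e_def
      by (rule Sm_base) (meson norm_fst_le norm_snd_le order_trans)
    have sE: "Sm S ep E" unfolding ep_def e_def
      by (rule Sm_base) (meson norm_fst_le norm_snd_le order_trans)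
    have sX: "Sm S ep X" unfolding X_def[abs_def]
      by (fast intro: Sm_add Sm_diff Sm_neg Sm_tr Sm_mml[OF cpt] Sm_mmr[OF cpt] sDU sDY sE ci cb)
    note sr = Sm_add Sm_diff Sm_neg Sm_tr Sm_mml[OF cpt] Sm_mmr[OF cpt] sDU sDY sE sX ci cb
    have sGd: "Sm S ep Gd" unfolding Gd_def[abs_def] by (fast intro: sr)
    have sHd: "Sm S ep Hd" unfolding Hd_def[abs_def] by (fast intro: sr)
    have sDUd: "Sm S ep DUd" unfolding DUd_def[abs_def] by (fast intro: sr sGd sHd)
    have sDYd: "Sm S ep DYd" unfolding DYd_def[abs_def] by (fast intro: sr)
    have sEd: "Sm S ep Ed" unfolding Ed_def[abs_def] by (fast intro: sr)
    have "Sm S ep ed" unfolding ed_def[abs_def] by (intro Sm_pair sDUd sDYd sEd)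
    then obtain c where c: "\<forall>s\<in>S. norm (ed s) \<le> c * norm (e s)" unfolding Sm_def ep_def by blast
    have R00: "R 0 = R0"
      using CC(4)[of 0] unfolding R_def init(2) by (simp add: Ct_def matrix_mul_assoc)
    have R0R: "R0 ** transpose R0 = mat 1" using R0_orth matrix_left_right_inverse by blast
    have e00: "e 0 = 0"
      unfolding e_def DU_def DY_def E_def R00 init using R0R by (simp add: zero_prod_def)
    show ?thesis
    proof (rule gronwall_zero[of t e ed c])
      show "(e has_vector_derivative ed s) (at s within {0..t})" if "s \<in> {0..t}" for s
        using has_vector_derivative_within_subset[OF de sub[unfolded S_def]] that by auto
      show "norm (ed s) \<le> c * norm (e s)" if "s \<in> {0..t}" for s using c that S_def by auto
    qed (use e00 t in auto)
  qed
  show ?thesis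
  proof (intro exI[of _ R] conjI allI impI)
    show "R 0 = R0"
      using CC(4)[of 0] unfolding R_def init(2) by (simp add: Ct_def matrix_mul_assoc)
  next
    fix t :: real assume t: "t \<ge> 0"
    have z: "DU t = 0" "DY t = 0" "E t = 0" using e0[OF t] unfolding e_def by (auto simp: zero_prod_def)
    have "X t = 0" unfolding X_def z by simp
    then show "(R has_vector_derivative R t ** phi t - phit t ** R t) (at t within ?S)"
      using dR[OF t] unfolding Rd_def by simp
  next
    fix t :: real assume t: "t > 0"
    have z: "DU t = 0" "DY t = 0" "E t = 0" using e0[of t] t unfolding e_def by (auto simp: zero_prod_def)
    have RR: "R t ** transpose (R t) = mat 1" using z(3) unfolding E_def by simp
    then show "orthogonal_matrix (R t)"
      unfolding orthogonal_matrix_def using matrix_left_right_inverse by blast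
    show "U t = Ut t ** R t" using z(1) unfolding DU_def by simp
    show "Y t = Yt t ** R t" using z(2) unfolding DY_def by simp
  qed
qed

end
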